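(* Consider $\min_{\beta\in\mathbb{R}^p} f(\beta)+\sum_{j=1}^p g_j(\beta_j)$ under the following hypotheses: $f$ is convex, differentiable, with $|\nabla_j f(x+he_j)-\nabla_j f(x)|\le L_j|h|$ ($L_j>0$); each $g_j$ is proper, closed, lower bounded and $g_j/L_j+\frac{\alpha}{2}(\cdot)^2$ is convex for some $\alpha<1$; cyclic proximal coordinate descent converges to a critical point $\hat\beta$; with $\mathcal{S}=\mathrm{gsupp}(\hat\beta)=\{j_1,\dots,j_{|\mathcal{S}|}\}$, $-\nabla_j f(\hat\beta)\in\mathrm{interior}(\partial g_j(\hat\beta_j))$ for $j\notin\mathcal{S}$, $f$ is $\mathcal{C}^3$ near $\hat\beta$, $g_j$ is $\mathcal{C}^3$ near $\hat\beta_j$ for $j\in\mathcal{S}$, and $M:=\nabla^2_{\mathcal{S},\mathcal{S}}f(\hat\beta)+\nabla^2_{\mathcal{S},\mathcal{S}}g(\hat\beta)\succ0$. Let $\gamma_j=1/L_j$ and, for $s\in[|\mathcal{S}|]$, $B^{(s)}=M^{1/2}_{:s}\,\frac{\gamma_{j_s}}{1+\gamma_{j_s}g_{j_s}''(\hat\beta_{j_s})}\,(M^{1/2}_{:s})^\top$, where $M^{1/2}_{:s}$ is the $s$-th column of $M^{1/2}$. Then for all $s\in[|\mathcal{S}|]$, $\|B^{(s)}\|_2\le1$.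
   Context: $\partial$ is the Fréchet subdifferential, critical point means $-\nabla f(x)\in\partial g(x)$ with $g(\beta)=\sum_jg_j(\beta_j)$, and $\mathrm{gsupp}(\beta)=\{j:\partial g_j(\beta_j)\text{ is a singleton}\}$. $\nabla^2_{\mathcal{S},\mathcal{S}}g(\hat\beta)=\mathrm{diag}(g_j''(\hat\beta_j))_{j\in\mathcal{S}}$. Cyclic proximal coordinate descent updates, for $j=1,\dots,p$ in turn, $\beta_j\leftarrow\mathrm{prox}_{g_j/L_j}(\beta_j-\nabla_jf(\beta)/L_j)$, with $\mathrm{prox}_h(z)=\arg\min_u\frac12(u-z)^2+h(u)$. *)

theory Defs
  imports "HOL-Analysis.Analysis" "HOL-Library.Extended_Real"
begin

definition proper_fun :: "(real \<Rightarrow> ereal) \<Rightarrow> bool" where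
  "proper_fun h \<longleftrightarrow> (\<exists>x. h x < \<infinity>) \<and> (\<forall>x. h x > -\<infinity>)"

text \<open>closed = lower semicontinuous = closed epigraph\<close>
definition closed_fun :: "(real \<Rightarrow> ereal) \<Rightarrow> bool" where
  "closed_fun h \<longleftrightarrow> closed {(x, t::real). h x \<le> ereal t}"

definition lower_bounded_fun :: "(real \<Rightarrow> ereal) \<Rightarrow> bool" where
  "lower_bounded_fun h \<longleftrightarrow> (\<exists>m::real. \<forall>x. ereal m \<le> h x)"

definition convex_efun :: "(real \<Rightarrow> ereal) \<Rightarrow> bool" where
  "convex_efun h \<longleftrightarrow> convex {(x, t::real). h x \<le> ereal t}"

definition frechet_subdiff :: "(real \<Rightarrow> ereal) \<Rightarrow> real \<Rightarrow> real set" where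
  "frechet_subdiff h x = {v. \<bar>h x\<bar> \<noteq> \<infinity> \<and>
     (\<forall>\<epsilon>>0. \<exists>\<delta>>0. \<forall>y. \<bar>y - x\<bar> < \<delta> \<longrightarrow>
        ereal (real_of_ereal (h x) + v * (y - x) - \<epsilon> * \<bar>y - x\<bar>) \<le> h y)}"

definition prox :: "(real \<Rightarrow> ereal) \<Rightarrow> real \<Rightarrow> real" where
  "prox h z = (THE u. \<forall>v. ereal ((u - z)\<^sup>2 / 2) + h u \<le> ereal ((v - z)\<^sup>2 / 2) + h v)"

definition cd_update ::
  "(real^'n \<Rightarrow> real^'n) \<Rightarrow> ('n \<Rightarrow> real \<Rightarrow> ereal) \<Rightarrow> ('n \<Rightarrow> real) \<Rightarrow> 'n \<Rightarrow> real^'n \<Rightarrow> real^'n"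
  where
  "cd_update gradf g L j \<beta> =
     (\<chi> i. if i = j then prox (\<lambda>u. g j u / ereal (L j)) (\<beta> $ j - gradf \<beta> $ j / L j) else \<beta> $ i)"

definition cd_epoch ::
  "(real^('n::{finite,linorder}) \<Rightarrow> real^('n::{finite,linorder})) \<Rightarrow> ('n::{finite,linorder} \<Rightarrow> real \<Rightarrow> ereal) \<Rightarrow> ('n::{finite,linorder} \<Rightarrow> real) \<Rightarrow> real^('n::{finite,linorder}) \<Rightarrow> real^('n::{finite,linorder})"
  where
  "cd_epoch gradf g L \<beta> = fold (cd_update gradf g L) (sorted_list_of_set UNIV) \<beta>"

definition C3_on :: "('a::euclidean_space \<Rightarrow> real) \<Rightarrow> 'a set \<Rightarrow> bool" where
  "C3_on f U \<longleftrightarrow>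
    (\<exists>(D1 :: 'a \<Rightarrow> 'a \<Rightarrow>\<^sub>L real) (D2 :: 'a \<Rightarrow> 'a \<Rightarrow>\<^sub>L ('a \<Rightarrow>\<^sub>L real))
       (D3 :: 'a \<Rightarrow> 'a \<Rightarrow>\<^sub>L ('a \<Rightarrow>\<^sub>L ('a \<Rightarrow>\<^sub>L real))).
       (\<forall>x\<in>U. (f has_derivative blinfun_apply (D1 x)) (at x)) \<and>
       (\<forall>x\<in>U. (D1 has_derivative blinfun_apply (D2 x)) (at x)) \<and>
       (\<forall>x\<in>U. (D2 has_derivative blinfun_apply (D3 x)) (at x)) \<and>
       continuous_on U D3)"

section \<open>Matrices indexed by a finite index set S (an |S| x |S| matrix)\<close>

definition pos_def_on :: "'n set \<Rightarrow> ('n \<Rightarrow> 'n \<Rightarrow> real) \<Rightarrow> bool" where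
  "pos_def_on S A \<longleftrightarrow> (\<forall>i\<in>S. \<forall>k\<in>S. A i k = A k i) \<and>
     (\<forall>x. (\<exists>i\<in>S. x i \<noteq> 0) \<longrightarrow> (\<Sum>i\<in>S. \<Sum>k\<in>S. x i * A i k * x k) > 0)"

definition pos_semidef_on :: "'n set \<Rightarrow> ('n \<Rightarrow> 'n \<Rightarrow> real) \<Rightarrow> bool" where
  "pos_semidef_on S A \<longleftrightarrow> (\<forall>i\<in>S. \<forall>k\<in>S. A i k = A k i) \<and>
     (\<forall>x. (\<Sum>i\<in>S. \<Sum>k\<in>S. x i * A i k * x k) \<ge> 0)"

definition is_psd_sqrt_on :: "'n set \<Rightarrow> ('n \<Rightarrow> 'n \<Rightarrow> real) \<Rightarrow> ('n \<Rightarrow> 'n \<Rightarrow> real) \<Rightarrow> bool" where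
  "is_psd_sqrt_on S M R \<longleftrightarrow> pos_semidef_on S R \<and>
     (\<forall>i\<in>S. \<forall>k\<in>S. (\<Sum>l\<in>S. R i l * R l k) = M i k)"

definition spec_norm_on :: "'n set \<Rightarrow> ('n \<Rightarrow> 'n \<Rightarrow> real) \<Rightarrow> real" where
  "spec_norm_on S B = Sup {sqrt (\<Sum>i\<in>S. (\<Sum>k\<in>S. B i k * x k)\<^sup>2) | x. (\<Sum>k\<in>S. (x k)\<^sup>2) \<le> 1}"

end

theory Submission
  imports Defs
begin

lemma convex_deriv_mono:
  fixes \<phi> :: "real \<Rightarrow> real"
  assumes cv: "convex_on I \<phi>" and I: "convex I" and xy: "x \<in> I" "y \<in> I" "x < y"
    and da: "DERIV \<phi> x :> a" and db: "DERIV \<phi> y :> b"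
  shows "a \<le> b"
proof -
  define s where "s = (\<phi> y - \<phi> x) / (y - x)"
  have sub: "{x..y} \<subseteq> I" using I xy by (meson atMostAtLeast_subset_convex)
  have cI: "convex_on {x..y} \<phi>" using convex_on_subset[OF cv sub] by simp
  have key: "\<phi> c \<le> s * (c - x) + \<phi> x" if "c \<in> {x..y}" for c
    using convex_onD_Icc'[OF cI that] unfolding s_def by simp
  have as: "a \<le> s"
  proof (rule ccontr)
    assume "\<not> a \<le> s"
    have "DERIV (\<lambda>t. \<phi> t - s * t) x :> a - s"
      using da by (auto intro!: derivative_eq_intros)
    note der = this
    obtain d where d: "d > 0" "\<And>h. h > 0 \<Longrightarrow> h < d \<Longrightarrow> \<phi> x - s * x < \<phi> (x + h) - s * (x + h)"
      using DERIV_pos_inc_right[OF der] \<open>\<not> a \<le> s\<close> by auto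
    define h where "h = min (d/2) (y - x)"
    have "h > 0" "h < d" using d xy by (auto simp: h_def)
    then have "\<phi> x - s * x < \<phi> (x + h) - s * (x + h)" using d by blast
    moreover have "\<phi> (x + h) \<le> s * (x + h - x) + \<phi> x"
      using key[of "x+h"] \<open>h > 0\<close> by (auto simp: h_def)
    ultimately show False by (simp add: algebra_simps)
  qed
  have sb: "s \<le> b"
  proof (rule ccontr)
    assume "\<not> s \<le> b"
    have "DERIV (\<lambda>t. \<phi> t - s * t) y :> b - s"
      using db by (auto intro!: derivative_eq_intros)
    note der = this
    obtain d where d: "d > 0" "\<And>h. h > 0 \<Longrightarrow> h < d \<Longrightarrow> \<phi> y - s * y < \<phi> (y - h) - s * (y - h)"
      using DERIV_neg_dec_left[OF der] \<open>\<not> s \<le> b\<close> by auto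
    define h where "h = min (d/2) (y - x)"
    have "h > 0" "h < d" using d xy by (auto simp: h_def)
    then have "\<phi> y - s * y < \<phi> (y - h) - s * (y - h)" using d by blast
    moreover have "\<phi> (y - h) \<le> s * (y - h - x) + \<phi> x"
      using key[of "y-h"] \<open>h > 0\<close> by (auto simp: h_def)
    moreover have "\<phi> y = s * (y - x) + \<phi> x" using xy by (simp add: s_def)
    ultimately show False by (simp add: algebra_simps)
  qed
  show ?thesis using as sb by simp
qed

lemma convex_second_deriv_nonneg:
  fixes \<phi> :: "real \<Rightarrow> real"
  assumes cv: "convex_on (ball x0 e) \<phi>" and e: "e > 0"
    and d1: "\<And>x. x \<in> ball x0 e \<Longrightarrow> DERIV \<phi> x :> \<phi>' x"
    and d2: "DERIV \<phi>' x0 :> c"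
  shows "c \<ge> 0"
proof (rule ccontr)
  assume "\<not> c \<ge> 0"
  then obtain d where d: "d > 0" "\<And>h. h > 0 \<Longrightarrow> h < d \<Longrightarrow> \<phi>' (x0 + h) < \<phi>' x0"
    using DERIV_neg_dec_right[OF d2] \<open>\<not> c \<ge> 0\<close> by auto
  define h where "h = min (d/2) (e/2)"
  have h: "h > 0" "h < d" "h < e" using d e by (auto simp: h_def)
  have "\<phi>' x0 \<le> \<phi>' (x0 + h)"
    by (rule convex_deriv_mono[OF cv convex_ball, of x0 "x0+h"]) (use h e d1 in \<open>auto simp: dist_real_def\<close>)
  with d h show False by force
qed

theorem lemma2:
  fixes f :: "real^('n::{finite,linorder}) \<Rightarrow> real"
    and gradf :: "real^('n::{finite,linorder}) \<Rightarrow> real^('n::{finite,linorder})"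
    and g :: "'n \<Rightarrow> real \<Rightarrow> ereal"
    and L :: "'n \<Rightarrow> real"
    and \<alpha> :: real
    and \<beta>hat :: "real^('n::{finite,linorder})"
    and H :: "real^('n::{finite,linorder})^('n::{finite,linorder})"
    and S :: "'n set"
    and M :: "'n \<Rightarrow> 'n \<Rightarrow> real"
    and R :: "'n \<Rightarrow> 'n \<Rightarrow> real"
    and \<gamma> :: "'n \<Rightarrow> real"
    and B :: "'n \<Rightarrow> 'n \<Rightarrow> 'n \<Rightarrow> real"
  assumes f_convex: "convex_on UNIV f"
    and f_grad: "\<And>x. (f has_derivative (\<lambda>h. gradf x \<bullet> h)) (at x)"
    and L_pos: "\<And>j. L j > 0"
    and f_coord_lip: "\<And>x j h. \<bar>gradf (x + h *\<^sub>R axis j 1) $ j - gradf x $ j\<bar> \<le> L j * \<bar>h\<bar>"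
    and g_proper: "\<And>j. proper_fun (g j)"
    and g_closed: "\<And>j. closed_fun (g j)"
    and g_lb: "\<And>j. lower_bounded_fun (g j)"
    and \<alpha>_lt: "\<alpha> < 1"
    and g_weakconv: "\<And>j. convex_efun (\<lambda>u. g j u / ereal (L j) + ereal (\<alpha> / 2 * u\<^sup>2))"
    and cd_conv: "\<exists>\<beta>0. (\<lambda>k. (cd_epoch gradf g L ^^ k) \<beta>0) \<longlonglongrightarrow> \<beta>hat"
    and critical: "\<And>j. - gradf \<beta>hat $ j \<in> frechet_subdiff (g j) (\<beta>hat $ j)"
    and S_def: "S = {j. \<exists>v. frechet_subdiff (g j) (\<beta>hat $ j) = {v}}"
    and nondeg: "\<And>j. j \<notin> S \<Longrightarrow> - gradf \<beta>hat $ j \<in> interior (frechet_subdiff (g j) (\<beta>hat $ j))"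
    and f_C3: "\<exists>U. open U \<and> \<beta>hat \<in> U \<and> C3_on f U"
    and g_C3: "\<And>j. j \<in> S \<Longrightarrow> \<exists>U. open U \<and> \<beta>hat $ j \<in> U \<and> (\<forall>u\<in>U. \<bar>g j u\<bar> \<noteq> \<infinity>) \<and>
                   C3_on (\<lambda>u. real_of_ereal (g j u)) U"
    and H_hess: "(gradf has_derivative (\<lambda>h. H *v h)) (at \<beta>hat)"
    and M_def: "\<And>i k. M i k = H $ i $ k +
                  (if i = k then deriv (deriv (\<lambda>u. real_of_ereal (g i u))) (\<beta>hat $ i) else 0)"
    and M_pd: "pos_def_on S M"
    and R_sqrt: "is_psd_sqrt_on S M R"
    and \<gamma>_def: "\<And>j. \<gamma> j = 1 / L j"
    and B_def: "\<And>s i k. B s i k = R i s *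
                  (\<gamma> s / (1 + \<gamma> s * deriv (deriv (\<lambda>u. real_of_ereal (g s u))) (\<beta>hat $ s))) * R k s"
  shows "\<forall>s\<in>S. spec_norm_on S (B s) \<le> 1"
  proof
  fix s assume sS: "s \<in> S"
  define G where "G = (\<lambda>u. real_of_ereal (g s u))"
  define x0 where "x0 = \<beta>hat $ s"
  define d where "d = deriv (deriv G) x0"
  from g_C3[OF sS] obtain U where U0: "open U" "\<beta>hat $ s \<in> U" "\<forall>u\<in>U. \<bar>g s u\<bar> \<noteq> \<infinity>"
      "C3_on (\<lambda>u. real_of_ereal (g s u)) U"
    by (elim exE conjE) (rule that)
  have U: "open U" "x0 \<in> U" "\<And>u. u \<in> U \<Longrightarrow> \<bar>g s u\<bar> \<noteq> \<infinity>" "C3_on G U"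
    using U0 unfolding G_def x0_def by auto
  obtain D1 :: "real \<Rightarrow> real \<Rightarrow>\<^sub>L real" and D2 :: "real \<Rightarrow> real \<Rightarrow>\<^sub>L (real \<Rightarrow>\<^sub>L real)"
    where D1: "\<And>x. x \<in> U \<Longrightarrow> (G has_derivative blinfun_apply (D1 x)) (at x)"
      and D2: "\<And>x. x \<in> U \<Longrightarrow> (D1 has_derivative blinfun_apply (D2 x)) (at x)"
    using U(4) unfolding C3_on_def by blast
  define G' where "G' = (\<lambda>x. blinfun_apply (D1 x) 1)"
  have lin1: "blinfun_apply F = (\<lambda>h. F 1 * h)" for F :: "real \<Rightarrow>\<^sub>L real"
  proof
    fix h :: real
    have "F h = F (h *\<^sub>R 1)" by simp
    also have "\<dots> = h *\<^sub>R F 1" by (rule blinfun.scaleR_right)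
    finally show "F h = F 1 * h" by simp
  qed
  have dG: "DERIV G x :> G' x" if "x \<in> U" for x
    using D1[OF that] unfolding has_field_derivative_def G'_def by (metis lin1)
  have dG'0: "DERIV G' x0 :> D2 x0 1 1"
  proof -
    have "((\<lambda>x. blinfun_apply (D1 x) 1) has_derivative (\<lambda>h. blinfun_apply (D2 x0 h) 1)) (at x0)"
      by (rule bounded_linear.has_derivative[OF bounded_linear_apply_blinfun D2[OF U(2)]])
    moreover have "(\<lambda>h. blinfun_apply (D2 x0 h) 1) = (\<lambda>h. D2 x0 1 1 * h)"
    proof
      fix h :: real
      have "D2 x0 h = D2 x0 (h *\<^sub>R 1)" by simp
      also have "\<dots> = h *\<^sub>R D2 x0 1" by (rule blinfun.scaleR_right)
      finally show "blinfun_apply (D2 x0 h) 1 = D2 x0 1 1 * h" by (simp add: scaleR_blinfun.rep_eq mult.commute)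
    qed
    ultimately show ?thesis unfolding has_field_derivative_def G'_def by simp
  qed
  have "DERIV (deriv G) x0 :> D2 x0 1 1"
    by (rule has_field_derivative_transform_within_open[OF dG'0 U(1) U(2)])
       (metis DERIV_imp_deriv dG)
  then have d_eq: "d = D2 x0 1 1" unfolding d_def by (rule DERIV_imp_deriv)
  obtain e where e: "e > 0" "ball x0 e \<subseteq> U" using U(1,2) openE by blast
  define \<phi> where "\<phi> = (\<lambda>u. G u / L s + \<alpha> / 2 * u\<^sup>2)"
  have gfin: "g s u = ereal (G u)" if "u \<in> U" for u
    using U(3)[OF that] unfolding G_def by (cases "g s u") auto
  have Lne: "L s \<noteq> 0" using L_pos[of s] by simp
  have ephi: "g s u / ereal (L s) + ereal (\<alpha> / 2 * u\<^sup>2) = ereal (\<phi> u)" if "u \<in> U" for u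
    using gfin[OF that] Lne by (simp add: \<phi>_def)
  have cvx_epi: "convex {(x, t::real). g s x / ereal (L s) + ereal (\<alpha> / 2 * x\<^sup>2) \<le> ereal t}"
    using g_weakconv[of s] unfolding convex_efun_def by simp
  have cv: "convex_on (ball x0 e) \<phi>"
  proof (rule convex_onI)
    fix t x y :: real assume t: "0 < t" "t < 1" and xy: "x \<in> ball x0 e" "y \<in> ball x0 e"
    have xU: "x \<in> U" and yU: "y \<in> U" using xy e by auto
    have zb: "(1 - t) *\<^sub>R x + t *\<^sub>R y \<in> ball x0 e"
      using convexD[OF convex_ball xy, of "1-t" t] t by auto
    have "(1 - t) *\<^sub>R (x, \<phi> x) + t *\<^sub>R (y, \<phi> y)
        \<in> {(x, t::real). g s x / ereal (L s) + ereal (\<alpha> / 2 * x\<^sup>2) \<le> ereal t}"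
      by (rule convexD[OF cvx_epi]) (use t ephi xU yU in auto)
    then have "ereal (\<phi> ((1 - t) *\<^sub>R x + t *\<^sub>R y)) \<le> ereal ((1 - t) * \<phi> x + t * \<phi> y)"
      using ephi[of "(1 - t) *\<^sub>R x + t *\<^sub>R y"] zb e by auto
    then show "\<phi> ((1 - t) *\<^sub>R x + t *\<^sub>R y) \<le> (1 - t) * \<phi> x + t * \<phi> y" by simp
  qed (rule convex_ball)
  have dphi: "DERIV \<phi> x :> G' x / L s + \<alpha> * x" if "x \<in> ball x0 e" for x
  proof -
    have xU: "x \<in> U" using that e by auto
    show ?thesis unfolding \<phi>_def
      using dG[OF xU] Lne by (auto intro!: derivative_eq_intros)
  qed
  have dphi2: "DERIV (\<lambda>x. G' x / L s + \<alpha> * x) x0 :> D2 x0 1 1 / L s + \<alpha>"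
    using dG'0 Lne by (auto intro!: derivative_eq_intros)
  have "D2 x0 1 1 / L s + \<alpha> \<ge> 0"
    by (rule convex_second_deriv_nonneg[OF cv e(1) dphi dphi2])
  then have d_lb: "d / L s \<ge> - \<alpha>" using d_eq by simp
  define v where "v = axis s (1::real)"
  define q where "q = (\<lambda>t::real. gradf (\<beta>hat + t *\<^sub>R v) $ s)"
  have Hv: "(\<lambda>t. (H *v (t *\<^sub>R v)) $ s) = (\<lambda>t. H $ s $ s * t)"
    by (auto simp: v_def matrix_vector_mult_def axis_def if_distrib cong: if_cong)
  have dq: "DERIV q 0 :> H $ s $ s"
  proof -
    have l: "((\<lambda>t::real. \<beta>hat + t *\<^sub>R v) has_derivative (\<lambda>t. t *\<^sub>R v)) (at 0)"
      by (auto intro!: derivative_eq_intros)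
    have g0: "(gradf has_derivative (\<lambda>h. H *v h)) (at ((\<lambda>t::real. \<beta>hat + t *\<^sub>R v) 0))"
      using H_hess by simp
    have "((gradf \<circ> (\<lambda>t::real. \<beta>hat + t *\<^sub>R v)) has_derivative ((\<lambda>h. H *v h) \<circ> (\<lambda>t. t *\<^sub>R v))) (at 0)"
      by (rule diff_chain_at[OF l g0])
    then have "((\<lambda>t. (gradf (\<beta>hat + t *\<^sub>R v)) $ s) has_derivative (\<lambda>t. (H *v (t *\<^sub>R v)) $ s)) (at 0)"
      using bounded_linear.has_derivative[OF bounded_linear_vec_nth] by (simp add: o_def)
    then show ?thesis unfolding has_field_derivative_def q_def Hv by (simp add: mult.commute)
  qed
  have H_le: "H $ s $ s \<le> L s"
  proof (rule ccontr)
    assume "\<not> H $ s $ s \<le> L s"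
    have "DERIV (\<lambda>t. q t - L s * t) 0 :> H $ s $ s - L s"
      using dq by (auto intro!: derivative_eq_intros)
    note der = this
    obtain dd where dd: "dd > 0" "\<And>h. h > 0 \<Longrightarrow> h < dd \<Longrightarrow> q 0 - L s * 0 < q (0 + h) - L s * (0 + h)"
      using DERIV_pos_inc_right[OF der] \<open>\<not> H $ s $ s \<le> L s\<close> by auto
    have "q 0 < q (dd/2) - L s * (dd/2)" using dd(2)[of "dd/2"] dd(1) by simp
    moreover have "\<bar>q (dd/2) - q 0\<bar> \<le> L s * \<bar>dd/2\<bar>"
      using f_coord_lip[of \<beta>hat "dd/2" s] unfolding q_def v_def by simp
    ultimately show False using dd(1) by (simp add: abs_if split: if_splits)
  qed
  define c0 where "c0 = \<gamma> s / (1 + \<gamma> s * d)"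
  define N where "N = (\<Sum>i\<in>S. (R i s)\<^sup>2)"
  have Rsym: "\<And>l. l \<in> S \<Longrightarrow> R s l = R l s"
    using R_sqrt sS unfolding is_psd_sqrt_on_def pos_semidef_on_def by blast
  have "M s s = (\<Sum>l\<in>S. R s l * R l s)" using R_sqrt sS unfolding is_psd_sqrt_on_def by simp
  also have "\<dots> = N" unfolding N_def by (rule sum.cong) (auto simp: Rsym power2_eq_square)
  finally have MN: "M s s = N" .
  have Mss: "M s s = H $ s $ s + d" using M_def[of s s] unfolding d_def G_def x0_def by simp
  have N0: "N \<ge> 0" unfolding N_def by (simp add: sum_nonneg)
  have gpos: "\<gamma> s > 0" using L_pos[of s] \<gamma>_def[of s] by simp
  have gd: "\<gamma> s * d = d / L s" using \<gamma>_def[of s] by simp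
  have den: "1 + \<gamma> s * d > 0" using gd d_lb \<alpha>_lt by linarith
  have gH: "\<gamma> s * H $ s $ s \<le> 1"
  proof -
    have "\<gamma> s * H $ s $ s \<le> \<gamma> s * L s" using H_le gpos by simp
    also have "\<dots> = 1" using L_pos[of s] \<gamma>_def[of s] by simp
    finally show ?thesis .
  qed
  have c0N1: "c0 * N \<le> 1"
  proof -
    have "\<gamma> s * N = \<gamma> s * H $ s $ s + \<gamma> s * d" proof -
      have "N = H $ s $ s + d" using MN Mss by simp
      then show ?thesis by (simp add: distrib_left)
    qed
    then have "\<gamma> s * N \<le> 1 + \<gamma> s * d" using gH by linarith
    then show ?thesis unfolding c0_def using den by (simp add: field_simps)
  qed
  have c0N0: "c0 * N \<ge> 0" unfolding c0_def using gpos den N0 by simp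
  have Bsum: "(\<Sum>k\<in>S. B s i k * x k) = R i s * c0 * (\<Sum>k\<in>S. R k s * x k)" for i x
    by (simp add: B_def c0_def d_def G_def x0_def sum_distrib_left mult.assoc mult.left_commute)
  show "spec_norm_on S (B s) \<le> 1"
    unfolding spec_norm_on_def
  proof (rule cSup_least)
    show "{sqrt (\<Sum>i\<in>S. (\<Sum>k\<in>S. B s i k * x k)\<^sup>2) |x. (\<Sum>k\<in>S. (x k)\<^sup>2) \<le> 1} \<noteq> {}"
      by (rule ccontr) (use zero_le_one in \<open>auto dest!: spec[of _ "\<lambda>_. 0"]\<close>)
  next
    fix y assume "y \<in> {sqrt (\<Sum>i\<in>S. (\<Sum>k\<in>S. B s i k * x k)\<^sup>2) |x. (\<Sum>k\<in>S. (x k)\<^sup>2) \<le> 1}"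
    then obtain x where y: "y = sqrt (\<Sum>i\<in>S. (\<Sum>k\<in>S. B s i k * x k)\<^sup>2)"
      and x: "(\<Sum>k\<in>S. (x k)\<^sup>2) \<le> 1" by blast
    define P where "P = (\<Sum>k\<in>S. R k s * x k)"
    have "(\<Sum>i\<in>S. (\<Sum>k\<in>S. B s i k * x k)\<^sup>2) = (\<Sum>i\<in>S. (R i s)\<^sup>2 * (c0 * P)\<^sup>2)"
      unfolding Bsum P_def[symmetric] by (simp add: power_mult_distrib mult.assoc)
    also have "\<dots> = N * (c0 * P)\<^sup>2" unfolding N_def by (rule sum_distrib_right[symmetric])
    also have "\<dots> = c0\<^sup>2 * N * P\<^sup>2" by (simp add: power_mult_distrib mult_ac)
    also have "\<dots> \<le> c0\<^sup>2 * N * (N * 1)"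
    proof (rule mult_left_mono)
      have "P\<^sup>2 \<le> N * (\<Sum>k\<in>S. (x k)\<^sup>2)"
        unfolding P_def N_def by (rule Cauchy_Schwarz_ineq_sum)
      also have "\<dots> \<le> N * 1" by (rule mult_left_mono[OF x N0])
      finally show "P\<^sup>2 \<le> N * 1" .
    qed (use N0 in simp)
    also have "\<dots> = (c0 * N)\<^sup>2" by (simp add: power2_eq_square)
    also have "\<dots> \<le> 1" using c0N1 c0N0 by (simp add: power_le_one)
    finally show "y \<le> 1" using y by simp
  qed
qed

end
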